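(* Let $(g,f)$ be a Riordan matrix with $g(t)=\sum_{j\ge0}g_jt^j$, $g_0=1$, possessing a type-II $B$-sequence, and let $Z(t)=\sum_{n\ge0}z_nt^n$ be the generating function of its $Z$-sequence. Then $Z'(0)=z_1=0$, or equivalently, $g_1^2=g_0g_2$.
   Context: Let $K$ be $\mathbb{R}$ or $\mathbb{C}$. A (proper) Riordan matrix is a pair $(g,f)$ of formal power series in $K[[t]]$ with $g(0)=1$, $f(0)=0$, $f'(0)\neq 0$, identified with the infinite lower triangular matrix $(d_{n,k})_{n,k\ge0}$, $d_{n,k}=[t^n]g(t)f(t)^k$; we set $d_{n,k}=0$ if $n<0$, $k<0$ or $k>n$. The $Z$-sequence of $(g,f)$ is the unique sequence whose generating function $Z(t)$ satisfies $g(t)=1/(1-tZ(f(t)))$. A type-II $B$-sequence is a sequence $(\hat b_j)_{j\ge0}$ such that $d_{n+1,0}=\sum_{j\ge0}\hat b_j d_{n-j,j}$ for all $n\ge0$. *)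

theory Defs
  imports "HOL-Computational_Algebra.Formal_Power_Series"
begin

definition riordan :: "'a::field fps \<Rightarrow> 'a fps \<Rightarrow> bool" where
  "riordan g f \<longleftrightarrow> fps_nth g 0 = 1 \<and> fps_nth f 0 = 0 \<and> fps_nth f 1 \<noteq> 0"

definition riordan_entry :: "'a::field fps \<Rightarrow> 'a fps \<Rightarrow> nat \<Rightarrow> nat \<Rightarrow> 'a" where
  "riordan_entry g f n k = (if k > n then 0 else fps_nth (g * f ^ k) n)"

definition is_Z_series :: "'a::field fps \<Rightarrow> 'a fps \<Rightarrow> 'a fps \<Rightarrow> bool" where
  "is_Z_series g f Z \<longleftrightarrow> g = inverse (1 - fps_X * fps_compose Z f)"

text \<open>Type-II B-sequence: d_{n+1,0} = sum_j b_j d_{n-j,j}; terms with j > n have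
  negative row index and vanish, so the sum ranges over j \<le> n.\<close>
definition is_typeII_B_seq :: "'a::field fps \<Rightarrow> 'a fps \<Rightarrow> (nat \<Rightarrow> 'a) \<Rightarrow> bool" where
  "is_typeII_B_seq g f b \<longleftrightarrow>
     (\<forall>n. riordan_entry g f (Suc n) 0 = (\<Sum>j\<le>n. b j * riordan_entry g f (n - j) j))"

definition has_typeII_B_seq :: "'a::field fps \<Rightarrow> 'a fps \<Rightarrow> bool" where
  "has_typeII_B_seq g f \<longleftrightarrow> (\<exists>b. is_typeII_B_seq g f b)"

end

theory Submission
  imports Defs
begin

theorem proposition3p3:
  fixes g f Z :: "'a::real_normed_field fps"
  assumes "riordan g f"
    and "has_typeII_B_seq g f"
    and "is_Z_series g f Z"
  shows "fps_nth Z 1 = 0 \<and> fps_nth (fps_deriv Z) 0 = 0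
         \<and> (fps_nth g 1)^2 = fps_nth g 0 * fps_nth g 2"
proof -
  have g0: "fps_nth g 0 = 1" and f0: "fps_nth f 0 = 0" and f1: "fps_nth f 1 \<noteq> 0"
    using assms(1) by (auto simp: riordan_def)
  obtain b where B: "\<And>n. riordan_entry g f (Suc n) 0 = (\<Sum>j\<le>n. b j * riordan_entry g f (n - j) j)"
    using assms(2) by (auto simp: has_typeII_B_seq_def is_typeII_B_seq_def)
  have e1: "fps_nth g 1 = b 0"
    using B[of 0] g0 by (simp add: riordan_entry_def)
  have e2: "fps_nth g 2 = b 0 * fps_nth g 1"
    using B[of 1] by (simp add: riordan_entry_def numeral_2_eq_2)
  have gg: "(fps_nth g 1)^2 = fps_nth g 0 * fps_nth g 2"
    using e1 e2 g0 by (simp add: power2_eq_square)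
  define h where "h = fps_compose Z f"
  have h0: "fps_nth h 0 = fps_nth Z 0"
    unfolding h_def using f0 by (simp add: fps_compose_nth)
  have h1: "fps_nth h 1 = fps_nth Z 1 * fps_nth f 1"
    unfolding h_def using f0 by (simp add: fps_compose_nth)
  have ne: "fps_nth (1 - fps_X * h) 0 \<noteq> 0" by simp
  have inv: "g * (1 - fps_X * h) = 1"
    using assms(3) ne unfolding is_Z_series_def h_def[symmetric]
    by (simp add: inverse_mult_eq_1)
  have "g * (1 - fps_X * h) = g - fps_X * (g * h)" by (simp add: algebra_simps)
  hence inv2: "g - fps_X * (g * h) = 1" using inv by simp
  have c1: "fps_nth g 1 - fps_nth g 0 * fps_nth h 0 = 0"
    using arg_cong[OF inv2, of "\<lambda>p. fps_nth p 1"] by (simp add: fps_mult_nth)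
  have c2: "fps_nth g 2 - (fps_nth g 0 * fps_nth h 1 + fps_nth g 1 * fps_nth h 0) = 0"
    using arg_cong[OF inv2, of "\<lambda>p. fps_nth p 2"]
    by (simp add: fps_mult_nth numeral_2_eq_2)
  have "fps_nth Z 1 * fps_nth f 1 = 0"
    using c1 c2 gg g0 h0 h1 by (simp add: power2_eq_square algebra_simps)
  hence z1: "fps_nth Z 1 = 0" using f1 by simp
  show ?thesis using z1 gg by simp
qed

end
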